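(* Let $q > 1$ be an integer. For all positive integers $n$ and $M$, $$\Pr\left(W \in C(n,q,M+1)\right) \geq \Pr\left(W' \in C(n,q,M)\right),$$ where $W$ is chosen uniformly at random from $\{x_0,\ldots,x_{q-1}\}^{M+1}$ and $W'$ is chosen uniformly at random from $\{x_0,\ldots,x_{q-1}\}^{M}$.
   Context: Fix the alphabet $\{x_0,\ldots,x_{q-1}\}$ of $q$ letters. A word $W$ is an instance of a word $V = y_0y_1\cdots y_{m-1}$ (each $y_i$ a letter) if $W = A_0A_1\cdots A_{m-1}$ with each $A_i$ a nonempty word and $A_i = A_j$ whenever $y_i = y_j$. The Zimin words are defined by $Z_0 := \varepsilon$ (the empty word) and $Z_{n+1} := Z_n z_n Z_n$ for distinct letters $z_0,z_1,\dots$. $C(n,q,M)$ denotes the set of words $W \in \{x_0,\ldots,x_{q-1}\}^M$ that are instances of $Z_n$. *)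

theory Defs
  imports Complex_Main
begin

(* Letters x_0,...,x_{q-1} are represented by the naturals 0,...,q-1; words are lists. *)

definition is_instance :: "'a list \<Rightarrow> 'b list \<Rightarrow> bool" where
  "is_instance W V \<longleftrightarrow>
     (\<exists>As :: 'a list list. length As = length V \<and> (\<forall>A\<in>set As. A \<noteq> []) \<and>
        concat As = W \<and>
        (\<forall>i<length V. \<forall>j<length V. V ! i = V ! j \<longrightarrow> As ! i = As ! j))"

(* Zimin words, over the letters z_i represented by the natural i. *)
fun zimin :: "nat \<Rightarrow> nat list" where
  "zimin 0 = []"
| "zimin (Suc n) = zimin n @ [n] @ zimin n"

definition C :: "nat \<Rightarrow> nat \<Rightarrow> nat \<Rightarrow> nat list set" where
  "C n q M = {W. length W = M \<and> set W \<subseteq> {..<q} \<and> is_instance W (zimin n)}"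

definition words :: "nat \<Rightarrow> nat \<Rightarrow> nat list set" where
  "words q M = {W. length W = M \<and> set W \<subseteq> {..<q}}"

end

theory Submission imports Defs begin

lemma zimin_lt: "x \<in> set (zimin k) \<Longrightarrow> x < k"
  by (induction k) auto

lemma inst_nil: "is_instance W [] \<longleftrightarrow> W = []"
  unfolding is_instance_def by auto

lemma char_fwd:
  assumes "is_instance W (zimin (Suc k))"
  shows "\<exists>X Y. W = X@Y@X \<and> Y \<noteq> [] \<and> is_instance X (zimin k)"
proof -
  let ?V = "zimin k" let ?L = "length (zimin k)"
  obtain As where len: "length As = length (zimin (Suc k))" and ne: "\<forall>A\<in>set As. A \<noteq> []"
    and cc: "concat As = W" and eq: "\<forall>i<length (zimin (Suc k)). \<forall>j<length (zimin (Suc k)).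
        zimin (Suc k) ! i = zimin (Suc k) ! j \<longrightarrow> As ! i = As ! j"
    using assms unfolding is_instance_def by blast
  have lz: "length (zimin (Suc k)) = 2*?L + 1" by simp
  have lenA: "length As = 2*?L + 1" using len by simp
  define As1 where "As1 = take ?L As"
  define As2 where "As2 = drop (Suc ?L) As"
  define B where "B = As ! ?L"
  have split: "As = As1 @ [B] @ As2"
    unfolding As1_def As2_def B_def using lenA
  proof -
    have "?L < length As" using lenA by simp
    then have "drop ?L As = As ! ?L # drop (Suc ?L) As" by (rule Cons_nth_drop_Suc[symmetric])
    then show "As = take ?L As @ [As ! ?L] @ drop (Suc ?L) As"
      using append_take_drop_id[of ?L As] by simp
  qed
  have l1: "length As1 = ?L" and l2: "length As2 = ?L" using lenA unfolding As1_def As2_def by auto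
  have V1: "i < ?L \<Longrightarrow> zimin (Suc k) ! i = ?V ! i" for i by (simp add: nth_append)
  have V2: "i < ?L \<Longrightarrow> zimin (Suc k) ! (Suc ?L + i) = ?V ! i" for i by (simp add: nth_append)
  have A1: "i < ?L \<Longrightarrow> As ! i = As1 ! i" for i using split l1 by (simp add: nth_append)
  have A2: "i < ?L \<Longrightarrow> As ! (Suc ?L + i) = As2 ! i" for i using split l1 by (simp add: nth_append)
  have "As1 = As2"
  proof (rule nth_equalityI)
    show "length As1 = length As2" using l1 l2 by simp
    fix i assume "i < length As1"
    hence i: "i < ?L" using l1 by simp
    have "As ! i = As ! (Suc ?L + i)"
      using eq[rule_format, of i "Suc ?L + i"] i V1 V2 lz by simp
    then show "As1 ! i = As2 ! i" using A1 A2 i by simp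
  qed
  have "W = concat As1 @ B @ concat As1" using cc split \<open>As1 = As2\<close> by simp
  moreover have "B \<noteq> []" using ne split by simp
  moreover have "is_instance (concat As1) ?V"
    unfolding is_instance_def
  proof (intro exI[of _ As1] conjI allI impI)
    show "length As1 = ?L" by fact
    show "\<forall>A\<in>set As1. A \<noteq> []" using ne split by simp
    show "concat As1 = concat As1" ..
    fix i j assume "i < ?L" "j < ?L" "?V ! i = ?V ! j"
    then show "As1 ! i = As1 ! j" using eq[rule_format, of i j] V1 A1 lz by simp
  qed
  ultimately show ?thesis by blast
qed

lemma char_bwd:
  assumes "Y \<noteq> []" "is_instance X (zimin k)"
  shows "is_instance (X@Y@X) (zimin (Suc k))"
proof -
  let ?V = "zimin k" let ?L = "length (zimin k)"
  obtain As where len: "length As = ?L" and ne: "\<forall>A\<in>set As. A \<noteq> []"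
    and cc: "concat As = X" and eq: "\<forall>i<?L. \<forall>j<?L. ?V ! i = ?V ! j \<longrightarrow> As ! i = As ! j"
    using assms unfolding is_instance_def by blast
  define g where "g i = (if i < ?L then i else i - Suc ?L)" for i
  have Vg: "i < 2*?L+1 \<Longrightarrow> i \<noteq> ?L \<Longrightarrow> zimin (Suc k) ! i = ?V ! g i \<and> g i < ?L" for i
    unfolding g_def by (auto simp: nth_append)
  have Ag: "i < 2*?L+1 \<Longrightarrow> i \<noteq> ?L \<Longrightarrow> (As @ [Y] @ As) ! i = As ! g i" for i
    unfolding g_def using len by (auto simp: nth_append)
  have VL: "zimin (Suc k) ! ?L = k" by (simp add: nth_append)
  have Vne: "i < 2*?L+1 \<Longrightarrow> i \<noteq> ?L \<Longrightarrow> zimin (Suc k) ! i \<noteq> k" for i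
    using Vg[of i] zimin_lt[of "?V ! g i" k] nth_mem[of "g i" ?V] by auto
  show ?thesis unfolding is_instance_def
  proof (intro exI[of _ "As @ [Y] @ As"] conjI allI impI)
    show "length (As @ [Y] @ As) = length (zimin (Suc k))" using len by simp
    show "\<forall>A\<in>set (As @ [Y] @ As). A \<noteq> []" using ne assms(1) by auto
    show "concat (As @ [Y] @ As) = X @ Y @ X" using cc by simp
    fix i j assume i: "i < length (zimin (Suc k))" and j: "j < length (zimin (Suc k))"
      and ij: "zimin (Suc k) ! i = zimin (Suc k) ! j"
    have i': "i < 2*?L+1" and j': "j < 2*?L+1" using i j by auto
    show "(As @ [Y] @ As) ! i = (As @ [Y] @ As) ! j"
    proof (cases "i = ?L \<or> j = ?L")
      case True
      then have "i = j" using ij VL Vne i' j' by metis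
      then show ?thesis by simp
    next
      case False
      then have ni: "i \<noteq> ?L" and nj: "j \<noteq> ?L" by auto
      have gi: "g i < ?L" and gj: "g j < ?L" using Vg[OF i' ni] Vg[OF j' nj] by auto
      have "?V ! g i = ?V ! g j" using Vg[OF i' ni] Vg[OF j' nj] ij by simp
      then have "As ! g i = As ! g j" using eq gi gj by blast
      then show ?thesis using Ag[OF i' ni] Ag[OF j' nj] by simp
    qed
  qed
qed

lemma char: "is_instance W (zimin (Suc k)) \<longleftrightarrow> (\<exists>X Y. W = X@Y@X \<and> Y \<noteq> [] \<and> is_instance X (zimin k))"
  using char_fwd char_bwd by blast

lemma remove_mid:
  assumes "length A \<le> p" "p < length A + length B"
  shows "take p (A@B@Z) @ drop (Suc p) (A@B@Z) = A @ (take (p - length A) B @ drop (Suc (p - length A)) B) @ Z"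
proof -
  obtain r where p: "p = length A + r" using assms(1) le_Suc_ex by blast
  have r: "r < length B" using assms(2) p by simp
  have "take p (A@B@Z) = A @ take r B" using p r by simp
  moreover have "drop (Suc p) (A@B@Z) = drop (Suc r) B @ Z" using p r by simp
  ultimately show ?thesis using p by simp
qed
definition PP :: "nat \<Rightarrow> nat list \<Rightarrow> nat \<Rightarrow> bool" where
  "PP k W l \<longleftrightarrow> (\<exists>X Y. W = X@Y@X \<and> Y \<noteq> [] \<and> is_instance X (zimin k) \<and> length X = l)"

definition mu :: "nat \<Rightarrow> nat list \<Rightarrow> nat" where
  "mu k W = (LEAST l. PP k W l)"

definition ins :: "nat \<Rightarrow> nat list \<Rightarrow> nat \<Rightarrow> nat list" where
  "ins k W a = take (length W - mu k W) W @ [a] @ drop (length W - mu k W) W"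

definition recv :: "nat \<Rightarrow> nat list \<Rightarrow> nat list \<times> nat" where
  "recv k W' = (let p = length W' - mu k W' - 1 in (take p W' @ drop (Suc p) W', W' ! p))"

lemma key:
  assumes "is_instance W (zimin (Suc k))"
  shows "is_instance (ins k W a) (zimin (Suc k)) \<and> recv k (ins k W a) = (W, a)"
proof -
  define l where "l = mu k W"
  have ex: "\<exists>l. PP k W l" using char_fwd[OF assms] unfolding PP_def by blast
  have "PP k W l" unfolding l_def mu_def by (rule LeastI_ex[OF ex])
  then obtain X Y where W: "W = X@Y@X" and Y: "Y \<noteq> []" and X: "is_instance X (zimin k)"
    and lX: "length X = l" unfolding PP_def by blast
  define M where "M = length W"
  have M: "M = 2*l + length Y" using W lX M_def by simp
  have tk: "take (M - l) W = X@Y" and dr: "drop (M - l) W = X" using W lX M by simp_all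
  have "ins k W a = take (M - l) W @ [a] @ drop (M - l) W" unfolding ins_def M_def l_def ..
  then have W': "ins k W a = X@(Y@[a])@X" unfolding tk dr by simp
  have inst: "is_instance (ins k W a) (zimin (Suc k))" unfolding W' by (rule char_bwd[OF _ X]) simp
  have P': "PP k (ins k W a) l" unfolding PP_def using W' X lX by (intro exI[of _ X] exI[of _ "Y@[a]"]) simp
  define l' where "l' = mu k (ins k W a)"
  have le: "l' \<le> l" unfolding l'_def mu_def using Least_le[of "PP k (ins k W a)", OF P'] .
  have "l' = l"
  proof (rule ccontr)
    assume "l' \<noteq> l" hence lt: "l' < l" using le by simp
    have "PP k (ins k W a) l'" unfolding l'_def mu_def using LeastI[of "PP k (ins k W a)", OF P'] .
    then obtain X' Y' where W2: "ins k W a = X'@Y'@X'" and Y': "Y' \<noteq> []"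
      and X': "is_instance X' (zimin k)" and lX': "length X' = l'" unfolding PP_def by blast
    have lenW': "length (ins k W a) = M + 1" using W' M lX by simp
    have lY': "length Y' = M + 1 - 2*l'" using W2 lenW' lX' by simp
    define p where "p = M - l"
    have rm: "take p (ins k W a) @ drop (Suc p) (ins k W a) = W"
    proof -
      have "ins k W a = (X@Y)@[a]@X" using W' by simp
      moreover have "length (X@Y) = p" using M lX p_def by simp
      ultimately show ?thesis using W by simp
    qed
    have c1: "length X' \<le> p" using lX' lt M p_def by simp
    have c2: "p < length X' + length Y'" using lX' lY' lt M p_def by simp
    have "W = X' @ (take (p - length X') Y' @ drop (Suc (p - length X')) Y') @ X'"
      using rm remove_mid[OF c1 c2, of X'] W2 by simp
    moreover have "take (p - length X') Y' @ drop (Suc (p - length X')) Y' \<noteq> []"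
    proof -
      have "length Y' \<ge> 2" using lY' lt M Y by (cases Y) auto
      hence "p - length X' < length Y'" "Suc (p - length X') \<le> length Y'" using c2 by auto
      have "length (take (p - length X') Y' @ drop (Suc (p - length X')) Y') = length Y' - 1"
        using c2 by simp
      then show ?thesis using \<open>length Y' \<ge> 2\<close> by auto
    qed
    ultimately have "PP k W l'" unfolding PP_def using X' lX' by (intro exI[of _ X'] exI[of _ "take (p - length X') Y' @ drop (Suc (p - length X')) Y'"]) simp
    hence "l \<le> l'" unfolding l_def mu_def by (rule Least_le)
    then show False using lt by simp
  qed
  have "recv k (ins k W a) = (W, a)"
  proof -
    have p: "length (ins k W a) - mu k (ins k W a) - 1 = length (X@Y)"
      using \<open>l' = l\<close> l'_def W' lX by simp
    show ?thesis unfolding recv_def Let_def p using W' W by simp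
  qed
  then show ?thesis using inst by simp
qed

theorem mainTheorem4:
  fixes q n M :: nat
  assumes "q > 1" and "n > 0" and "M > 0"
  shows "real (card (C n q (M + 1))) / real (card (words q (M + 1)))
           \<ge> real (card (C n q M)) / real (card (words q M))"
proof -
  obtain k where n: "n = Suc k" using assms(2) gr0_implies_Suc by blast
  have wcard: "card (words q m) = q ^ m" for m
  proof -
    have "words q m = {xs. set xs \<subseteq> {..<q} \<and> length xs = m}" unfolding words_def by auto
    then show ?thesis using card_lists_length_eq[of "{..<q}" m] by simp
  qed
  have fin: "finite (C n q m)" for m
  proof -
    have "C n q m \<subseteq> {xs. set xs \<subseteq> {..<q} \<and> length xs = m}" unfolding C_def by auto
    then show ?thesis using finite_lists_length_eq[of "{..<q}" m] finite_subset by blast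
  qed
  let ?f = "\<lambda>(W, a). ins k W a"
  have inj: "inj_on ?f (C n q M \<times> {..<q})"
  proof (rule inj_onI)
    fix x y assume x: "x \<in> C n q M \<times> {..<q}" and y: "y \<in> C n q M \<times> {..<q}" and e: "?f x = ?f y"
    obtain W a where xa: "x = (W, a)" by fastforce
    obtain V b where yb: "y = (V, b)" by fastforce
    have iW: "is_instance W (zimin (Suc k))" using x xa n unfolding C_def by simp
    have "recv k (ins k W a) = (W, a)" using key[OF iW, of a] by (rule conjunct2)
    have iV: "is_instance V (zimin (Suc k))" using y yb n unfolding C_def by simp
    have "recv k (ins k V b) = (V, b)" using key[OF iV, of b] by (rule conjunct2)
    moreover note \<open>recv k (ins k W a) = (W, a)\<close>
    ultimately show "x = y" using e xa yb by simp
  qed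
  have sub: "?f ` (C n q M \<times> {..<q}) \<subseteq> C n q (M + 1)"
  proof
    fix z assume "z \<in> ?f ` (C n q M \<times> {..<q})"
    then obtain W a where z: "z = ins k W a" and W: "W \<in> C n q M" and a: "a < q" by auto
    have iW: "is_instance W (zimin (Suc k))" using W n unfolding C_def by simp
    have "is_instance (ins k W a) (zimin (Suc k))" using key[OF iW, of a] by (rule conjunct1)
    then have inst: "is_instance z (zimin n)" using z n by simp
    have lW: "length W = M" and sW: "set W \<subseteq> {..<q}" using W unfolding C_def by simp_all
    have "length z = M + 1" unfolding z ins_def using lW by simp
    moreover have "set z \<subseteq> {..<q}"
    proof -
      have "set (take (length W - mu k W) W) \<subseteq> {..<q}" using order_trans[OF set_take_subset sW] .
      moreover have "set (drop (length W - mu k W) W) \<subseteq> {..<q}" using order_trans[OF set_drop_subset sW] .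
      ultimately show ?thesis unfolding z ins_def using a by simp
    qed
    ultimately show "z \<in> C n q (M + 1)" using inst unfolding C_def by simp
  qed
  have "card (C n q M \<times> {..<q}) \<le> card (C n q (M + 1))"
    using card_inj_on_le[OF inj sub fin] .
  hence ineq: "card (C n q M) * q \<le> card (C n q (M + 1))" by (simp add: card_cartesian_product)
  have qpos: "(0::real) < real q ^ M" using assms(1) by simp
  have "real (card (C n q M)) / real q ^ M = real (card (C n q M) * q) / (real q ^ M * real q)"
    using assms(1) by simp
  also have "\<dots> \<le> real (card (C n q (M + 1))) / (real q ^ M * real q)"
  proof (rule divide_right_mono)
    have "real (card (C n q M) * q) \<le> real (card (C n q (M + 1)))" using ineq by (rule of_nat_mono)
    then show "real (card (C n q M) * q) \<le> real (card (C n q (M + 1)))" .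
    show "0 \<le> real q ^ M * real q" by simp
  qed
  finally show ?thesis using wcard by (simp add: mult.commute)
qed

end
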